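(* Fix a conic $\mathcal H$ containing points $A, B, C$, and a line $\ell$ containing a point $D$. For a point $E$ varying on $\mathcal H$, let the conic $\mathcal E$ through $A,B,C,D,E$ meet $\ell$ at $F \neq D$. Then line $EF$ passes through a fixed point $G$ on $\mathcal H$ (independent of $E$). *)

theory Defs
  imports "HOL-Analysis.Analysis"
begin

text \<open>Real projective plane in homogeneous coordinates: a point is a nonzero
vector of real^3, two such vectors represent the same point iff they are
nonzero multiples of each other.  A line is a nonzero vector L, incidence
is L \<bullet> p = 0.  A conic is a nonzero symmetric 3x3 matrix M (up to a nonzero
scalar), incidence is p \<bullet> (M *v p) = 0; it is nondegenerate iff det M \<noteq> 0.\<close>

definition pt :: "real^3 \<Rightarrow> bool" where
  "pt p \<longleftrightarrow> p \<noteq> 0"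

definition same_pt :: "real^3 \<Rightarrow> real^3 \<Rightarrow> bool" where
  "same_pt p q \<longleftrightarrow> (\<exists>c. c \<noteq> 0 \<and> q = c *\<^sub>R p)"

definition is_line :: "real^3 \<Rightarrow> bool" where
  "is_line L \<longleftrightarrow> L \<noteq> 0"

definition on_line :: "real^3 \<Rightarrow> real^3 \<Rightarrow> bool" where
  "on_line p L \<longleftrightarrow> L \<bullet> p = 0"

definition is_conic :: "real^3^3 \<Rightarrow> bool" where
  "is_conic M \<longleftrightarrow> M \<noteq> 0 \<and> transpose M = M"

definition nondeg_conic :: "real^3^3 \<Rightarrow> bool" where
  "nondeg_conic M \<longleftrightarrow> is_conic M \<and> det M \<noteq> 0"

definition on_conic :: "real^3 \<Rightarrow> real^3^3 \<Rightarrow> bool" where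
  "on_conic p M \<longleftrightarrow> p \<bullet> (M *v p) = 0"

definition same_conic :: "real^3^3 \<Rightarrow> real^3^3 \<Rightarrow> bool" where
  "same_conic M N \<longleftrightarrow> (\<exists>c. c \<noteq> 0 \<and> N = c *\<^sub>R M)"

definition unique_conic_through :: "real^3^3 \<Rightarrow> (real^3) set \<Rightarrow> bool" where
  "unique_conic_through M S \<longleftrightarrow>
     is_conic M \<and> (\<forall>p\<in>S. on_conic p M) \<and>
     (\<forall>N. is_conic N \<and> (\<forall>p\<in>S. on_conic p N) \<longrightarrow> same_conic M N)"

definition on_join :: "real^3 \<Rightarrow> real^3 \<Rightarrow> real^3 \<Rightarrow> bool" where
  "on_join G E F \<longleftrightarrow> (cross3 E F) \<bullet> G = 0"

end

theory Submission
  imports Defs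
begin
unbundle cross3_syntax

lemma lin3:
  fixes u v w :: "real^3"
  shows "((a1 *\<^sub>R u + a2 *\<^sub>R v + a3 *\<^sub>R w) \<times> (b1 *\<^sub>R u + b2 *\<^sub>R v + b3 *\<^sub>R w)) \<bullet> (c1 *\<^sub>R u + c2 *\<^sub>R v + c3 *\<^sub>R w)
    = (a1*(b2*c3 - b3*c2) - a2*(b1*c3 - b3*c1) + a3*(b1*c2 - b2*c1)) * ((u \<times> v) \<bullet> w)"
  by (simp add: cross3_simps forall_3)

lemma span2:
  fixes a p e :: "real^3"
  assumes "a \<times> p \<noteq> 0" "e \<bullet> (a \<times> p) = 0"
  shows "\<exists>x y. e = x *\<^sub>R a + y *\<^sub>R p"
proof -
  let ?n = "a \<times> p"
  have nn: "?n \<bullet> ?n \<noteq> 0" using assms(1) by simp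
  have "(?n \<bullet> ?n) *\<^sub>R e = ((e \<times> p) \<bullet> ?n) *\<^sub>R a + ((a \<times> e) \<bullet> ?n) *\<^sub>R p + (e \<bullet> ?n) *\<^sub>R ?n"
    by (simp add: cross3_simps forall_3)
  then have "(?n \<bullet> ?n) *\<^sub>R e = ((e \<times> p) \<bullet> ?n) *\<^sub>R a + ((a \<times> e) \<bullet> ?n) *\<^sub>R p" using assms(2) by simp
  then have "e = (((e \<times> p) \<bullet> ?n)/(?n \<bullet> ?n)) *\<^sub>R a + (((a \<times> e) \<bullet> ?n)/(?n \<bullet> ?n)) *\<^sub>R p"
    using nn by (metis (no_types, lifting) scaleR_right_distrib scaleR_scaleR divide_inverse_commute
        inverse_eq_divide left_inverse scaleR_one)
  then show ?thesis by blast
qed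

lemma par:
  fixes u w :: "real^3"
  assumes "u \<times> w = 0" "u \<noteq> 0"
  shows "\<exists>k. w = k *\<^sub>R u"
proof -
  have e: "u$2*w$3 = u$3*w$2" "u$3*w$1 = u$1*w$3" "u$1*w$2 = u$2*w$1"
    using assms(1) by (simp_all add: cross3_simps forall_3)
  have "u$1 \<noteq> 0 \<or> u$2 \<noteq> 0 \<or> u$3 \<noteq> 0" using assms(2) by (simp add: vec_eq_iff forall_3)
  then show ?thesis
  proof (elim disjE)
    assume h: "u$1 \<noteq> 0"
    show ?thesis
      by (rule exI[of _ "w$1/u$1"]) (use h e in \<open>auto simp: vec_eq_iff forall_3 field_simps\<close>)
  next
    assume h: "u$2 \<noteq> 0"
    show ?thesis
      by (rule exI[of _ "w$2/u$2"]) (use h e in \<open>auto simp: vec_eq_iff forall_3 field_simps\<close>)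
  next
    assume h: "u$3 \<noteq> 0"
    show ?thesis
      by (rule exI[of _ "w$3/u$3"]) (use h e in \<open>auto simp: vec_eq_iff forall_3 field_simps\<close>)
  qed
qed

lemma cross_cross_inner: fixes l p q :: "real^3"
  shows "l \<times> (p \<times> q) = (l \<bullet> q) *\<^sub>R p - (l \<bullet> p) *\<^sub>R q"
  by (simp add: cross3_simps forall_3)

lemma plane3:
  fixes l p q r :: "real^3"
  assumes "l \<noteq> 0" "l \<bullet> p = 0" "l \<bullet> q = 0" "l \<bullet> r = 0"
  shows "(p \<times> q) \<bullet> r = 0"
proof -
  have "l \<times> (p \<times> q) = 0" using assms by (simp add: cross_cross_inner)
  then obtain k where "p \<times> q = k *\<^sub>R l" using par assms(1) by blast
  then show ?thesis using assms(4) by (simp add: inner_commute)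
qed

definition symm :: "real^3 \<Rightarrow> real^3 \<Rightarrow> real^3^3" where
  "symm u v = (\<chi> i j. u$i * v$j + v$i * u$j)"

lemma symm_transpose: "transpose (symm u v) = symm u v"
  by (simp add: symm_def transpose_def vec_eq_iff)

lemma symm_quad: "x \<bullet> (symm u v *v x) = 2 * (u \<bullet> x) * (v \<bullet> x)"
  by (simp add: symm_def matrix_vector_mult_def inner_vec_def sum_3) (simp add: algebra_simps)

lemma symm_det: "det (symm u v) = 0"
  by (simp add: symm_def det_3) (simp add: algebra_simps)

lemma symm_nz: assumes "u \<noteq> 0" "v \<noteq> 0" shows "symm u v \<noteq> 0"
proof
  assume h: "symm u v = 0"
  have e: "\<And>i j. u$i * v$j + v$i * u$j = 0"
    using h by (simp add: symm_def vec_eq_iff) 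
  obtain i where i: "u$i \<noteq> 0" using assms(1) by (auto simp: vec_eq_iff)
  have "v$i = 0" using e[of i i] i by simp
  then have "\<And>j. v$j = 0" using e[of i] i by simp
  then show False using assms(2) by (simp add: vec_eq_iff)
qed

lemma det_scale3: "det (k *\<^sub>R (M::real^3^3)) = k^3 * det M"
  by (simp add: det_3 power3_eq_cube algebra_simps)

lemma nondeg_ker: assumes "det (M::real^3^3) \<noteq> 0" "M *v x = 0" shows "x = 0"
  using assms invertible_det_nz inj_matrix_vector_mult
  by (metis matrix_vector_mult_0_right injD)

lemma bsym: assumes "transpose M = M" shows "x \<bullet> (M *v y) = y \<bullet> (M *v (x::real^3))"
proof -
  have "x \<bullet> (M *v y) = (x v* M) \<bullet> y" by (simp add: dot_lmul_matrix)
  also have "\<dots> = (transpose M *v x) \<bullet> y" by simp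
  finally show ?thesis using assms by (simp add: inner_commute)
qed

lemma bil3:
  fixes u v w :: "real^3"
  assumes "transpose M = M"
  shows "(a1 *\<^sub>R u + a2 *\<^sub>R v + a3 *\<^sub>R w) \<bullet> (M *v (b1 *\<^sub>R u + b2 *\<^sub>R v + b3 *\<^sub>R w))
    = a1*b1*(u \<bullet> (M *v u)) + a2*b2*(v \<bullet> (M *v v)) + a3*b3*(w \<bullet> (M *v w))
      + (a1*b2 + a2*b1)*(u \<bullet> (M *v v)) + (a1*b3 + a3*b1)*(u \<bullet> (M *v w)) + (a2*b3 + a3*b2)*(v \<bullet> (M *v w))"
proof -
  have s: "v \<bullet> (M *v u) = u \<bullet> (M *v v)" "w \<bullet> (M *v u) = u \<bullet> (M *v w)" "w \<bullet> (M *v v) = v \<bullet> (M *v w)"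
    using bsym[OF assms] by auto
  show ?thesis
    by (simp add: matrix_vector_right_distrib matrix_vector_mult_scaleR inner_add_left inner_add_right s)
       (simp add: algebra_simps)
qed

lemma isotropic:
  fixes a p :: "real^3"
  assumes "nondeg_conic M" "a \<bullet> (M *v a) = 0" "p \<bullet> (M *v p) = 0" "a \<bullet> (M *v p) = 0"
  shows "a \<times> p = 0"
proof (rule ccontr)
  assume n: "a \<times> p \<noteq> 0"
  have sy: "transpose M = M" and dt: "det M \<noteq> 0" using assms(1) by (auto simp: nondeg_conic_def is_conic_def)
  have pa: "p \<bullet> (M *v a) = 0" using bsym[OF sy, of p a] assms(4) by simp
  have "(a \<times> p) \<times> (M *v a) = 0"
    by (metis cross_cross_inner cross_skew assms(2) pa inner_commute scaleR_zero_left diff_zero neg_equal_0_iff_equal)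
  then obtain k1 where k1: "M *v a = k1 *\<^sub>R (a \<times> p)" using par n by blast
  have "(a \<times> p) \<times> (M *v p) = 0"
    by (metis cross_cross_inner cross_skew assms(3,4) inner_commute scaleR_zero_left diff_zero neg_equal_0_iff_equal)
  then obtain k2 where k2: "M *v p = k2 *\<^sub>R (a \<times> p)" using par n by blast
  have "M *v (k2 *\<^sub>R a - k1 *\<^sub>R p) = 0"
    by (simp add: matrix_vector_mult_diff_distrib matrix_vector_mult_scaleR k1 k2)
  then have "k2 *\<^sub>R a - k1 *\<^sub>R p = 0" using nondeg_ker[OF dt] by blast
  then have e: "k2 *\<^sub>R a = k1 *\<^sub>R p" by simp
  show False
  proof (cases "k1 = 0")
    case True
    then have "M *v a = 0" using k1 by simp
    then have "a = 0" using nondeg_ker[OF dt] by simp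
    then show False using n by simp
  next
    case False
    then have "p = (k2/k1) *\<^sub>R a" using e by (metis divide_inverse_commute inverse_eq_divide scaleR_scaleR
          left_inverse scaleR_one)
    then show False using n by (simp add: cross_mult_right)
  qed
qed

lemma triple: "(x \<times> y) \<bullet> z = x \<bullet> (y \<times> (z::real^3))"
  by (simp add: cross3_simps forall_3)

lemma bil2:
  fixes u v :: "real^3"
  assumes "transpose M = M"
  shows "(a1 *\<^sub>R u + a2 *\<^sub>R v) \<bullet> (M *v (b1 *\<^sub>R u + b2 *\<^sub>R v))
    = a1*b1*(u \<bullet> (M *v u)) + a2*b2*(v \<bullet> (M *v v)) + (a1*b2 + a2*b1)*(u \<bullet> (M *v v))"
proof -
  have s: "v \<bullet> (M *v u) = u \<bullet> (M *v v)"
    using bsym[OF assms] by auto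
  show ?thesis
    by (simp add: matrix_vector_right_distrib matrix_vector_mult_scaleR inner_add_left inner_add_right s)
       (simp add: algebra_simps)
qed

lemma quad_scale: "x \<bullet> ((k *\<^sub>R M) *v x) = k * (x \<bullet> (M *v (x::real^3)))"
  by (simp add: scaleR_matrix_vector_assoc[symmetric])

lemma quadN: "x \<bullet> ((a *\<^sub>R M - b *\<^sub>R symm u v) *v x) = a * (x \<bullet> (M *v x)) - b * (2 * (u \<bullet> x) * (v \<bullet> x))"
  by (simp add: matrix_vector_mult_diff_rdistrib inner_diff_right quad_scale symm_quad)

lemma transpose_lin: "transpose (a *\<^sub>R M - b *\<^sub>R N) = a *\<^sub>R transpose M - b *\<^sub>R transpose (N::real^3^3)"
  by (simp add: transpose_def vec_eq_iff)

lemma cross_nz: assumes "pt a" "pt b" "\<not> same_pt a b" shows "a \<times> b \<noteq> 0"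
proof
  assume "a \<times> b = 0"
  then obtain k where k: "b = k *\<^sub>R a" using par assms(1) by (auto simp: pt_def)
  then have "k \<noteq> 0" using assms(2) by (auto simp: pt_def)
  then show False using assms(3) k by (auto simp: same_pt_def)
qed

lemma uniq_on: "unique_conic_through M S \<Longrightarrow> p \<in> S \<Longrightarrow> on_conic p M"
  by (simp add: unique_conic_through_def)

lemma uniq_prop:
  assumes "unique_conic_through M S" "is_conic N" "\<forall>p\<in>S. on_conic p N"
  shows "\<exists>c. c \<noteq> 0 \<and> N = c *\<^sub>R M"
  using assms by (auto simp: unique_conic_through_def same_conic_def)

lemma uniq_prop2:
  assumes "unique_conic_through M S" "is_conic N1" "\<forall>p\<in>S. on_conic p N1" "is_conic N2" "\<forall>p\<in>S. on_conic p N2"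
  shows "\<exists>k. N2 = k *\<^sub>R N1"
proof -
  obtain c1 where c1: "c1 \<noteq> 0" "N1 = c1 *\<^sub>R M" using uniq_prop[OF assms(1,2,3)] by blast
  obtain c2 where c2: "N2 = c2 *\<^sub>R M" using uniq_prop[OF assms(1,4,5)] by blast
  have "N2 = (c2/c1) *\<^sub>R N1" using c1 c2 by simp
  then show ?thesis by blast
qed

lemma uniq_sym:
  assumes "unique_conic_through M S" "transpose N = N" "\<forall>p\<in>S. on_conic p N" "on_conic x M"
  shows "on_conic x N"
proof (cases "N = 0")
  case True then show ?thesis by (simp add: on_conic_def)
next
  case False
  then have "is_conic N" using assms(2) by (simp add: is_conic_def)
  then obtain c where "N = c *\<^sub>R M" using uniq_prop[OF assms(1) _ assms(3)] by blast
  then show ?thesis using assms(4) by (simp add: on_conic_def quad_scale)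
qed

lemma nonuniq1:
  assumes "nondeg_conic H" "\<forall>p\<in>S. on_conic p H" "u \<noteq> 0" "v \<noteq> 0"
    "\<forall>p\<in>S. (u \<bullet> p) * (v \<bullet> p) = 0" "unique_conic_through M S"
  shows False
proof -
  have cH: "is_conic H" using assms(1) by (simp add: nondeg_conic_def)
  have cQ: "is_conic (symm u v)" using symm_nz[OF assms(3,4)] symm_transpose by (simp add: is_conic_def)
  have oQ: "\<forall>p\<in>S. on_conic p (symm u v)" using assms(5) by (simp add: on_conic_def symm_quad)
  obtain k where k: "symm u v = k *\<^sub>R H" using uniq_prop2[OF assms(6) cH assms(2) cQ oQ] by blast
  have "k^3 * det H = 0" using k symm_det det_scale3 by metis
  then have "k = 0" using assms(1) by (simp add: nondeg_conic_def)
  then show False using k symm_nz[OF assms(3,4)] by simp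
qed

lemma detABC:
  assumes nd: "nondeg_conic H" and "pt A" "pt B" "pt C"
    and "on_conic A H" "on_conic B H" "on_conic C H"
    and "\<not> same_pt A B" "\<not> same_pt A C" "\<not> same_pt B C"
  shows "(A \<times> B) \<bullet> C \<noteq> 0"
proof
  assume h: "(A \<times> B) \<bullet> C = 0"
  have sy: "transpose H = H" using nd by (simp add: nondeg_conic_def is_conic_def)
  have ab: "A \<times> B \<noteq> 0" using cross_nz assms by blast
  obtain x y where xy: "C = x *\<^sub>R A + y *\<^sub>R B" using span2[OF ab] h by (metis inner_commute)
  have bab: "A \<bullet> (H *v B) \<noteq> 0" using isotropic[OF nd] assms ab by (auto simp: on_conic_def)
  have "C \<bullet> (H *v C) = 0" using assms by (simp add: on_conic_def)
  then have "2*x*y*(A \<bullet> (H *v B)) = 0" using assms(5,6) unfolding xy bil2[OF sy]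
    by (simp add: on_conic_def)
  then have "x = 0 \<or> y = 0" using bab by simp
  then show False
  proof
    assume "x = 0"
    then have "C = y *\<^sub>R B" using xy by simp
    moreover then have "y \<noteq> 0" using assms(4) by (auto simp: pt_def)
    ultimately show False using assms(10) by (auto simp: same_pt_def)
  next
    assume "y = 0"
    then have "C = x *\<^sub>R A" using xy by simp
    moreover then have "x \<noteq> 0" using assms(4) by (auto simp: pt_def)
    ultimately show False using assms(9) by (auto simp: same_pt_def)
  qed
qed

lemma case1:
  assumes nd: "nondeg_conic H" and pA: "pt A" and pC: "pt C" and pE: "pt E"
    and oA: "on_conic A H" "on_conic B H" "on_conic C H" "on_conic E H"
    and ab: "A \<times> B \<noteq> 0" and cb: "C \<times> B \<noteq> 0"
    and sD: "same_pt D A"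
    and u: "unique_conic_through M {A, B, C, D, E}"
  shows False
proof -
  obtain c where c: "c \<noteq> 0" "A = c *\<^sub>R D" using sD by (auto simp: same_pt_def)
  then have Dd: "D = (1/c) *\<^sub>R A" by simp
  define v where "v = (if C \<times> E \<noteq> 0 then C \<times> E else C \<times> B)"
  have v0: "v \<noteq> 0" using cb by (simp add: v_def)
  have vC: "v \<bullet> C = 0" by (simp add: v_def dot_cross_self inner_commute)
  have vE: "v \<bullet> E = 0"
  proof (cases "C \<times> E = 0")
    case True
    then obtain k where "E = k *\<^sub>R C" using par pC by (auto simp: pt_def)
    then show ?thesis using True by (simp add: v_def dot_cross_self inner_commute)
  next
    case False then show ?thesis by (simp add: v_def dot_cross_self)
  qed
  have oD: "on_conic D H" using oA(1) Dd by (simp add: on_conic_def matrix_vector_mult_scaleR)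
  show False
    apply (rule nonuniq1[OF nd _ ab v0 _ u])
    using oA oD apply simp
    using vC vE Dd by (auto simp: dot_cross_self inner_commute)
qed

lemma case2:
  assumes u: "unique_conic_through M S" and XS: "X \<in> S" and LX: "on_line X L"
    and nD: "\<not> same_pt D X" and pF: "pt F" "pt X"
    and sub: "\<forall>P. pt P \<and> on_line P L \<and> on_conic P M \<longrightarrow> same_pt D P \<or> same_pt F P"
  shows "on_join X E F"
proof -
  have "same_pt F X" using sub uniq_on[OF u XS] LX nD pF by blast
  then obtain c where "X = c *\<^sub>R F" by (auto simp: same_pt_def)
  then show ?thesis by (simp add: on_join_def dot_cross_self)
qed

lemma case3:
  assumes nd: "nondeg_conic H" and oA: "on_conic A H" "on_conic B H" "on_conic C H"
    and L: "is_line L" and pD: "pt D" and LD: "on_line D L" and hD: "on_conic D H"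
  shows "\<exists>G. pt G \<and> on_conic G H \<and>
    (\<forall>E ME F. pt E \<and> on_conic E H \<and> unique_conic_through ME {A, B, C, D, E} \<and>
       pt F \<and> on_line F L \<and> on_conic F ME \<and> \<not> same_pt D F \<longrightarrow> on_join G E F)"
proof -
  have sy: "transpose H = H" using nd by (simp add: nondeg_conic_def is_conic_def)
  have cH: "is_conic H" using nd by (simp add: nondeg_conic_def)
  define Y where "Y = L \<times> D"
  have L0: "L \<noteq> 0" and D0: "D \<noteq> 0" and LD': "L \<bullet> D = 0" using L pD LD by (auto simp: is_line_def pt_def on_line_def)
  have LY: "L \<bullet> Y = 0" by (simp add: Y_def dot_cross_self)
  have DY: "D \<bullet> Y = 0" by (simp add: Y_def dot_cross_self)
  have Y0: "Y \<noteq> 0"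
  proof
    assume "Y = 0"
    then obtain k where k: "D = k *\<^sub>R L" using par[of L D] L0 Y_def by auto
    then have "k * (L \<bullet> L) = 0" using LD' by simp
    then have "k = 0" using L0 by simp
    then show False using k D0 by simp
  qed
  have DxY: "D \<times> Y \<noteq> 0"
  proof
    assume "D \<times> Y = 0"
    then obtain k where k: "Y = k *\<^sub>R D" using par D0 by blast
    then have "k * (D \<bullet> D) = 0" using DY by simp
    then have "k = 0" using D0 by simp
    then show False using k Y0 by simp
  qed
  define hY where "hY = Y \<bullet> (H *v Y)"
  define bDY where "bDY = D \<bullet> (H *v Y)"
  have hD0: "D \<bullet> (H *v D) = 0" using hD by (simp add: on_conic_def)
  define G where "G = hY *\<^sub>R D + (-2*bDY) *\<^sub>R Y"
  have G0: "G \<noteq> 0"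
  proof
    assume g: "G = 0"
    have "G \<times> D = (-2*bDY) *\<^sub>R (Y \<times> D)" by (simp add: G_def cross3_simps forall_3)
    then have "bDY = 0" using g DxY by (metis cross_skew neg_equal_0_iff_equal scaleR_eq_0_iff
          cross_zero_left mult_eq_0_iff zero_neq_numeral neg_equal_zero)
    then have "hY = 0" using g D0 by (simp add: G_def)
    then have "D \<times> Y = 0" using isotropic[OF nd hD0, of Y] hY_def bDY_def \<open>bDY = 0\<close> by simp
    then show False using DxY by simp
  qed
  have GH: "on_conic G H"
    unfolding on_conic_def G_def bil2[OF sy] using hD0 by (simp add: hY_def[symmetric] bDY_def[symmetric])
  show ?thesis
  proof (intro exI[of _ G] conjI allI impI)
    show "pt G" using G0 by (simp add: pt_def)
    show "on_conic G H" by (rule GH)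
    fix E ME F
    assume h: "pt E \<and> on_conic E H \<and> unique_conic_through ME {A, B, C, D, E} \<and>
       pt F \<and> on_line F L \<and> on_conic F ME \<and> \<not> same_pt D F"
    then have u: "unique_conic_through ME {A, B, C, D, E}" and F0: "F \<noteq> 0" and LF: "L \<bullet> F = 0"
      and nDF: "\<not> same_pt D F" and oE: "on_conic E H"
      by (auto simp: pt_def on_line_def)
    have allH: "\<forall>p\<in>{A, B, C, D, E}. on_conic p H" using oA hD oE by simp
    obtain c where c: "c \<noteq> 0" "H = c *\<^sub>R ME" using uniq_prop[OF u cH allH] by blast
    have "on_conic F ME" using h by blast
    then have hF: "F \<bullet> (H *v F) = 0" using c by (simp add: on_conic_def quad_scale)
    have "(D \<times> Y) \<bullet> F = 0" using plane3[OF L0 LD' LY LF] .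
    then obtain x y where xy: "F = x *\<^sub>R D + y *\<^sub>R Y" using span2[OF DxY] by (metis inner_commute)
    have y0: "y \<noteq> 0"
    proof
      assume "y = 0"
      then have "F = x *\<^sub>R D" using xy by simp
      moreover then have "x \<noteq> 0" using F0 by auto
      ultimately show False using nDF by (auto simp: same_pt_def)
    qed
    have "2*x*y*bDY + y*y*hY = 0" using hF unfolding xy bil2[OF sy] using hD0
      by (simp add: hY_def[symmetric] bDY_def[symmetric])
    moreover have "y * (2*x*bDY + y*hY) = 2*x*y*bDY + y*y*hY" by (simp add: algebra_simps)
    ultimately have "2*x*bDY + y*hY = 0" using y0 by simp
    then have e: "y*hY = -2*x*bDY" by simp
    have "y *\<^sub>R G = (y*hY) *\<^sub>R D + (-2*bDY*y) *\<^sub>R Y"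
      unfolding G_def by (simp add: scaleR_diff_right algebra_simps)
    also have "\<dots> = (-2*bDY) *\<^sub>R F" unfolding e xy by (simp add: scaleR_add_right)
    finally have "y *\<^sub>R G = (-2*bDY) *\<^sub>R F" .
    then have "y * ((E \<times> F) \<bullet> G) = 0"
      by (metis inner_scaleR_right dot_cross_self(3) mult_zero_right)
    then show "on_join G E F" using y0 by (simp add: on_join_def)
  qed
qed

lemma cr1: "(x \<times> y) \<bullet> x = (0::real)" and cr2: "(x \<times> y) \<bullet> y = (0::real)"
  by (simp_all add: cross3_simps forall_3)

lemma trip_swap1: "(A \<times> C) \<bullet> B = - ((A \<times> B) \<bullet> (C::real^3))"
  by (simp add: cross3_simps forall_3)
lemma trip_cyc: "(B \<times> D) \<bullet> A = (A \<times> B) \<bullet> (D::real^3)"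
  by (simp add: cross3_simps forall_3)
lemma trip_cyc2: "(C \<times> D) \<bullet> A = (A \<times> C) \<bullet> (D::real^3)"
  by (simp add: cross3_simps forall_3)

lemma quad_scaled: "(k *\<^sub>R x) \<bullet> (H *v (k *\<^sub>R (x::real^3))) = k*k*(x \<bullet> (H *v x))"
  by (simp add: matrix_vector_mult_scaleR)

lemma noE:
  assumes nd: "nondeg_conic H" and pA: "pt A" and pB: "pt B" and pC: "pt C"
    and oA: "on_conic A H" and oB: "on_conic B H" and oC: "on_conic C H"
    and ab: "A \<times> B \<noteq> 0" and ac: "A \<times> C \<noteq> 0" and dABC: "(A \<times> B) \<bullet> C \<noteq> 0"
    and hD: "D \<bullet> (H *v D) \<noteq> 0" and Ea: "E = a *\<^sub>R A"
    and u: "unique_conic_through M {A, B, C, D, E}"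
  shows False
proof -
  have cd: "C \<times> D \<noteq> 0"
  proof
    assume "C \<times> D = 0"
    then obtain k where "D = k *\<^sub>R C" using par pC by (auto simp: pt_def)
    then show False using hD oC by (simp add: on_conic_def matrix_vector_mult_scaleR)
  qed
  have bd: "B \<times> D \<noteq> 0"
  proof
    assume "B \<times> D = 0"
    then obtain k where "D = k *\<^sub>R B" using par pB by (auto simp: pt_def)
    then show False using hD oB by (simp add: on_conic_def matrix_vector_mult_scaleR)
  qed
  define Q1 where "Q1 = symm (A \<times> B) (C \<times> D)"
  define Q2 where "Q2 = symm (A \<times> C) (B \<times> D)"
  have c1: "is_conic Q1" using symm_nz[OF ab cd] symm_transpose by (simp add: is_conic_def Q1_def)
  have c2: "is_conic Q2" using symm_nz[OF ac bd] symm_transpose by (simp add: is_conic_def Q2_def)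
  have o1: "\<forall>p\<in>{A, B, C, D, E}. on_conic p Q1"
    by (simp add: Q1_def on_conic_def symm_quad Ea cr1 cr2)
  have o2: "\<forall>p\<in>{A, B, C, D, E}. on_conic p Q2"
    by (simp add: Q2_def on_conic_def symm_quad Ea cr1 cr2)
  obtain k where k: "Q2 = k *\<^sub>R Q1" using uniq_prop2[OF u c1 o1 c2 o2] by blast
  have k0: "k \<noteq> 0"
  proof
    assume "k = 0"
    then have "Q2 = 0" using k by simp
    then show False using symm_nz[OF ac bd] unfolding Q2_def by blast
  qed
  have "(A + B) \<bullet> (Q2 *v (A + B)) = k * ((A + B) \<bullet> (Q1 *v (A + B)))" using k by (simp add: quad_scale)
  moreover have "(A + B) \<bullet> (Q2 *v (A + B)) = 2 * ((A \<times> C) \<bullet> B) * ((B \<times> D) \<bullet> A)"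
    by (simp add: Q2_def symm_quad inner_add_right cr1 cr2)
  moreover have "(A + B) \<bullet> (Q1 *v (A + B)) = 0"
    by (simp add: Q1_def symm_quad inner_add_right cr1 cr2)
  ultimately have "2 * ((A \<times> C) \<bullet> B) * ((B \<times> D) \<bullet> A) = 0" by simp
  then have bdA: "(A \<times> B) \<bullet> D = 0" using dABC trip_swap1[of A C B] trip_cyc[of B D A] by simp
  have "(A + C) \<bullet> (Q2 *v (A + C)) = k * ((A + C) \<bullet> (Q1 *v (A + C)))" using k by (simp add: quad_scale)
  moreover have "(A + C) \<bullet> (Q2 *v (A + C)) = 0"
    by (simp add: Q2_def symm_quad inner_add_right cr1 cr2)
  moreover have "(A + C) \<bullet> (Q1 *v (A + C)) = 2 * ((A \<times> B) \<bullet> C) * ((C \<times> D) \<bullet> A)"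
    by (simp add: Q1_def symm_quad inner_add_right cr1 cr2)
  ultimately have "k * (2 * ((A \<times> B) \<bullet> C) * ((C \<times> D) \<bullet> A)) = 0" by simp
  then have cdA: "(A \<times> C) \<bullet> D = 0" using dABC k0 trip_cyc2[of C D A] by simp
  obtain x y where xy: "D = x *\<^sub>R A + y *\<^sub>R B" using span2[OF ab] bdA by (metis inner_commute)
  have "y * ((A \<times> C) \<bullet> B) = 0" using cdA unfolding xy by (simp add: inner_add_right cr1 cr2)
  then have "y = 0" using dABC trip_swap1[of A C B] by simp
  then have "D = x *\<^sub>R A" using xy by simp
  then show False using hD oA by (simp add: on_conic_def matrix_vector_mult_scaleR)
qed


lemma case4:
  assumes nd: "nondeg_conic H" and pA: "pt A" and pB: "pt B" and pC: "pt C"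
    and oA: "on_conic A H" and oB: "on_conic B H" and oC: "on_conic C H"
    and nAB: "\<not> same_pt A B" and nAC: "\<not> same_pt A C" and nBC: "\<not> same_pt B C"
    and L: "is_line L" and pD: "pt D" and LDl: "on_line D L"
    and hD: "D \<bullet> (H *v D) \<noteq> 0" and bet: "(B \<times> C) \<bullet> D \<noteq> 0"
    and LA: "L \<bullet> A \<noteq> 0" and LB: "L \<bullet> B \<noteq> 0" and LC: "L \<bullet> C \<noteq> 0"
  shows "\<exists>G. pt G \<and> on_conic G H \<and>
    (\<forall>E ME F. pt E \<and> on_conic E H \<and> unique_conic_through ME {A, B, C, D, E} \<and>
       pt F \<and> on_line F L \<and> on_conic F ME \<and> \<not> same_pt D F \<longrightarrow> on_join G E F)"
proof -
  have sy: "transpose H = H" using nd by (simp add: nondeg_conic_def is_conic_def)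
  have L0: "L \<noteq> 0" and D0: "D \<noteq> 0" and LD: "L \<bullet> D = 0" and A0: "A \<noteq> 0" and C0: "C \<noteq> 0"
    using L pD LDl pA pC by (auto simp: is_line_def pt_def on_line_def)
  have ab: "A \<times> B \<noteq> 0" using cross_nz pA pB nAB by blast
  have ac: "A \<times> C \<noteq> 0" using cross_nz pA pC nAC by blast
  have bc: "B \<times> C \<noteq> 0" using cross_nz pB pC nBC by blast
  have dABC: "(A \<times> B) \<bullet> C \<noteq> 0" using detABC[OF nd pA pB pC oA oB oC nAB nAC nBC] .
  have HA: "A \<bullet> (H *v A) = 0" and HB: "B \<bullet> (H *v B) = 0" and HC: "C \<bullet> (H *v C) = 0"
    using oA oB oC by (auto simp: on_conic_def)
  define X where "X = L \<times> (B \<times> C)"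
  have LX: "L \<bullet> X = 0" by (simp add: X_def dot_cross_self)
  have BCX: "(B \<times> C) \<bullet> X = 0" by (simp add: X_def dot_cross_self)
  have X0: "X \<noteq> 0"
  proof
    assume "X = 0"
    then obtain k where "B \<times> C = k *\<^sub>R L" using par[of L "B \<times> C"] L0 X_def by auto
    then show False using bet LD by simp
  qed
  have XD: "X \<times> D \<noteq> 0"
  proof
    assume "X \<times> D = 0"
    then obtain k where "D = k *\<^sub>R X" using par X0 by blast
    then show False using bet BCX by simp
  qed
  define hX where "hX = X \<bullet> (H *v X)"
  define hDv where "hDv = D \<bullet> (H *v D)"
  define bAD where "bAD = A \<bullet> (H *v D)"
  define bAX where "bAX = A \<bullet> (H *v X)"
  define bXD where "bXD = X \<bullet> (H *v D)"
  define \<delta> where "\<delta> = (A \<times> X) \<bullet> D"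
  have hDv0: "hDv \<noteq> 0" using hD hDv_def by simp
  have \<delta>0: "\<delta> \<noteq> 0"
  proof
    assume "\<delta> = 0"
    then have "A \<bullet> (X \<times> D) = 0" using \<delta>_def triple by simp
    then obtain x y where "A = x *\<^sub>R X + y *\<^sub>R D" using span2[OF XD] by blast
    then show False using LA LX LD by (simp add: inner_add_right)
  qed
  have hX0: "hX \<noteq> 0"
  proof
    assume h0: "hX = 0"
    have "X \<bullet> (B \<times> C) = 0" using BCX by (simp add: inner_commute)
    then obtain x y where xy: "X = x *\<^sub>R B + y *\<^sub>R C" using span2[OF bc] by blast
    have bBC: "B \<bullet> (H *v C) \<noteq> 0" using isotropic[OF nd HB HC] bc by auto
    have "2*x*y*(B \<bullet> (H *v C)) = 0" using h0 unfolding hX_def xy bil2[OF sy] using HB HC by simp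
    then have "x = 0 \<or> y = 0" using bBC by simp
    then show False
    proof
      assume "x = 0"
      then have "X = y *\<^sub>R C" using xy by simp
      then show False using LX X0 LC by simp
    next
      assume "y = 0"
      then have "X = x *\<^sub>R B" using xy by simp
      then show False using LX X0 LB by simp
    qed
  qed
  define c where "c = hDv*bAX - 2*bAD*bXD"
  define g1 where "g1 = hX*hDv"
  define g2 where "g2 = -2*c"
  define g3 where "g3 = -2*hX*bAD"
  define G where "G = g1 *\<^sub>R A + g2 *\<^sub>R X + g3 *\<^sub>R D"
  have "(G \<times> X) \<bullet> D = g1 * \<delta>"
    by (simp add: G_def cross_add_left cross_mult_left inner_add_left cr1 cr2 \<delta>_def)
  then have G0: "G \<noteq> 0" using \<delta>0 hX0 hDv0 g1_def by auto
  have "G \<bullet> (H *v G) = g1*g1*0 + g2*g2*hX + g3*g3*hDv + (g1*g2+g2*g1)*bAX + (g1*g3+g3*g1)*bAD + (g2*g3+g3*g2)*bXD"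
    unfolding G_def bil3[OF sy] HA hX_def hDv_def bAX_def bAD_def bXD_def by simp
  also have "\<dots> = 0" unfolding g1_def g2_def g3_def c_def by algebra
  finally have GH: "on_conic G H" by (simp add: on_conic_def)
  show ?thesis
  proof (intro exI[of _ G] conjI allI impI)
    show "pt G" using G0 by (simp add: pt_def)
    show "on_conic G H" by (rule GH)
    fix E ME F
    assume h: "pt E \<and> on_conic E H \<and> unique_conic_through ME {A, B, C, D, E} \<and>
       pt F \<and> on_line F L \<and> on_conic F ME \<and> \<not> same_pt D F"
    then have u: "unique_conic_through ME {A, B, C, D, E}" and F0: "F \<noteq> 0" and LF: "L \<bullet> F = 0"
      and nDF: "\<not> same_pt D F" and HE: "E \<bullet> (H *v E) = 0" and oF: "on_conic F ME"
      by (auto simp: pt_def on_line_def on_conic_def)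
    have "(X \<times> D) \<bullet> F = 0" using plane3[OF L0 LX LD LF] .
    then obtain r t where st: "F = r *\<^sub>R X + t *\<^sub>R D" using span2[OF XD] by (metis inner_commute)
    have r0: "r \<noteq> 0"
    proof
      assume "r = 0"
      then have "F = t *\<^sub>R D" using st by simp
      moreover then have "t \<noteq> 0" using F0 by auto
      ultimately show False using nDF by (auto simp: same_pt_def)
    qed
    define pD where "pD = (E \<times> A) \<bullet> D"
    define pX where "pX = (E \<times> A) \<bullet> X"
    define \<beta> where "\<beta> = (B \<times> C) \<bullet> D"
    define N where "N = (2*pD*\<beta>) *\<^sub>R H - hDv *\<^sub>R symm (E \<times> A) (B \<times> C)"
    have Nt: "transpose N = N" unfolding N_def transpose_lin sy symm_transpose ..
    have NS: "\<forall>p\<in>{A, B, C, D, E}. on_conic p N"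
      unfolding N_def on_conic_def quadN using HA HB HC HE
      by (simp add: cr1 cr2 pD_def \<beta>_def hDv_def)
    have "on_conic F N" using uniq_sym[OF u Nt NS oF] .
    then have eqN: "(2*pD*\<beta>) * (F \<bullet> (H *v F)) - hDv * (2 * ((E \<times> A) \<bullet> F) * ((B \<times> C) \<bullet> F)) = 0"
      unfolding on_conic_def N_def quadN .
    have HF: "F \<bullet> (H *v F) = r*r*hX + t*t*hDv + (r*t+t*r)*bXD"
      unfolding st bil2[OF sy] hX_def hDv_def bXD_def ..
    have phF: "(E \<times> A) \<bullet> F = r*pX + t*pD" unfolding st pX_def pD_def by (simp add: inner_add_right)
    have psF: "(B \<times> C) \<bullet> F = t*\<beta>" unfolding st \<beta>_def using BCX by (simp add: inner_add_right)
    define p2 where "p2 = t*hDv"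
    define p3 where "p3 = -(r*hX + 2*t*bXD)"
    define P where "P = p2 *\<^sub>R X + p3 *\<^sub>R D"
    have phP: "(E \<times> A) \<bullet> P = p2*pX + p3*pD" unfolding P_def pX_def pD_def by (simp add: inner_add_right)
    have eqN': "(2*pD*\<beta>) * (r*r*hX + t*t*hDv + (r*t+t*r)*bXD) - hDv * (2 * (r*pX + t*pD) * (t*\<beta>)) = 0"
      using eqN unfolding HF phF psF .
    have alg: "r*\<beta>*(p2*pX + p3*pD) * (-2) = (2*pD*\<beta>) * (r*r*hX + t*t*hDv + (r*t+t*r)*bXD) - hDv * (2 * (r*pX + t*pD) * (t*\<beta>))"
      unfolding p2_def p3_def by algebra
    have "r*\<beta>*(p2*pX + p3*pD) * (-2) = 0" unfolding alg by (rule eqN')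
    then have "r*\<beta>*(p2*pX + p3*pD) = 0" by simp
    then have phP0: "(E \<times> A) \<bullet> P = 0" using r0 bet \<beta>_def phP by simp
    have AP: "A \<times> P \<noteq> 0"
    proof
      assume "A \<times> P = 0"
      then obtain k where k: "P = k *\<^sub>R A" using par A0 by blast
      have "L \<bullet> P = 0" unfolding P_def using LX LD by (simp add: inner_add_right)
      then have "k = 0" using k LA by simp
      then have P0: "P = 0" using k by simp
      then have "P \<times> D = 0" by simp
      then have "p2 *\<^sub>R (X \<times> D) = 0" unfolding P_def by (simp add: cross_add_left cross_mult_left)
      then have "p2 = 0" using XD by simp
      then have "t = 0" using hDv0 p2_def by simp
      then have "p3 *\<^sub>R D = 0" using P0 P_def \<open>p2 = 0\<close> by simp
      then have "r*hX = 0" using D0 p3_def \<open>t = 0\<close> by simp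
      then show False using r0 hX0 by simp
    qed
    have "E \<bullet> (A \<times> P) = 0" using phP0 triple by simp
    then obtain a b where ab': "E = a *\<^sub>R A + b *\<^sub>R P" using span2[OF AP] by blast
    have b0: "b \<noteq> 0"
    proof
      assume "b = 0"
      then have "E = a *\<^sub>R A" using ab' by simp
      then show False using noE[OF nd pA pB pC oA oB oC ab ac dABC hD _ u] by blast
    qed
    define HP where "HP = p2*p2*hX + p3*p3*hDv + (p2*p3+p3*p2)*bXD"
    define BAP where "BAP = p2*bAX + p3*bAD"
    have HPd: "P \<bullet> (H *v P) = HP" unfolding P_def bil2[OF sy] HP_def hX_def hDv_def bXD_def ..
    have BAPd: "A \<bullet> (H *v P) = BAP" unfolding P_def BAP_def bAX_def bAD_def
      by (simp add: matrix_vector_right_distrib matrix_vector_mult_scaleR inner_add_right)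
    have "a*a*0 + b*b*HP + (a*b+b*a)*BAP = 0"
      using HE unfolding ab' bil2[OF sy] HA HPd BAPd .
    then have hE2: "b*(b*HP + 2*a*BAP) = 0" by (simp add: algebra_simps)
    then have hE3: "2*a*BAP = - b*HP" using b0 by simp
    have BAP0: "BAP \<noteq> 0"
    proof
      assume "BAP = 0"
      then have "HP = 0" using hE3 b0 by simp
      then have "A \<times> P = 0" using isotropic[OF nd HA] HPd BAPd \<open>BAP = 0\<close> by simp
      then show False using AP by simp
    qed
    have Ee: "E = a *\<^sub>R A + (b*p2) *\<^sub>R X + (b*p3) *\<^sub>R D" unfolding ab' P_def by (simp add: algebra_simps)
    have Fe: "F = 0 *\<^sub>R A + r *\<^sub>R X + t *\<^sub>R D" unfolding st by simp
    define coef where "coef = a*(r*g3 - t*g2) - (b*p2)*(0*g3 - t*g1) + (b*p3)*(0*g2 - r*g1)"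
    have det: "(E \<times> F) \<bullet> G = coef * \<delta>"
      unfolding coef_def \<delta>_def G_def by (subst Ee, subst Fe, rule lin3)
    have id: "- HP*(r*g3 - t*g2) + 2*BAP*(p2*t*g1 - p3*r*g1) = 0"
      unfolding HP_def BAP_def p2_def p3_def g1_def g2_def g3_def c_def by algebra
    have "2*BAP*coef = b*(- HP*(r*g3 - t*g2) + 2*BAP*(p2*t*g1 - p3*r*g1)) + (r*g3 - t*g2)*(2*a*BAP + b*HP)"
      unfolding coef_def by algebra
    then have "2*BAP*coef = 0" using id hE3 by simp
    then have "coef = 0" using BAP0 by simp
    then show "on_join G E F" unfolding on_join_def det by simp
  qed
qed


lemma same_pt_sym: "same_pt a b \<Longrightarrow> same_pt b a"
  unfolding same_pt_def by (metis divide_inverse_commute inverse_eq_divide scaleR_scaleR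
      left_inverse scaleR_one divide_eq_0_iff one_neq_zero)

lemma trip_cyc3: "(C \<times> A) \<bullet> B = (A \<times> B) \<bullet> (C::real^3)"
  by (simp add: cross3_simps forall_3)

theorem fact2p1:
  fixes MH :: "real^3^3" and A B C D L :: "real^3"
  assumes "nondeg_conic MH"
    and "pt A" "pt B" "pt C"
    and "on_conic A MH" "on_conic B MH" "on_conic C MH"
    and "\<not> same_pt A B" "\<not> same_pt A C" "\<not> same_pt B C"
    and "is_line L" "pt D" "on_line D L"
  shows "\<exists>G. pt G \<and> on_conic G MH \<and>
    (\<forall>E ME F.
       pt E \<and> on_conic E MH \<and>
       unique_conic_through ME {A, B, C, D, E} \<and>
       pt F \<and> on_line F L \<and> on_conic F ME \<and> \<not> same_pt D F \<and>
       (\<forall>P. pt P \<and> on_line P L \<and> on_conic P ME \<longrightarrow> same_pt D P \<or> same_pt F P) \<and>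
       \<not> same_pt E F
       \<longrightarrow> on_join G E F)"
proof -
  note nd = assms(1) and pA = assms(2) and pB = assms(3) and pC = assms(4)
    and oA = assms(5) and oB = assms(6) and oC = assms(7)
    and nAB = assms(8) and nAC = assms(9) and nBC = assms(10)
    and L = assms(11) and pD = assms(12) and LD = assms(13)
  have ab: "A \<times> B \<noteq> 0" using cross_nz pA pB nAB by blast
  have ac: "A \<times> C \<noteq> 0" using cross_nz pA pC nAC by blast
  have bc: "B \<times> C \<noteq> 0" using cross_nz pB pC nBC by blast
  have ba: "B \<times> A \<noteq> 0" using ab cross_skew[of B A] by simp
  have ca: "C \<times> A \<noteq> 0" using ac cross_skew[of C A] by simp
  have cb: "C \<times> B \<noteq> 0" using bc cross_skew[of C B] by simp
  have s1: "{B, C, A, D, E} = {A, B, C, D, E}" for E by auto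
  have s2: "{C, A, B, D, E} = {A, B, C, D, E}" for E by auto
  show ?thesis
  proof (cases "same_pt D A \<or> same_pt D B \<or> same_pt D C")
    case True
    show ?thesis
    proof (intro exI[of _ A] conjI allI impI)
      show "pt A" "on_conic A MH" using pA oA by auto
      fix E ME F
      assume h: "pt E \<and> on_conic E MH \<and> unique_conic_through ME {A, B, C, D, E} \<and>
       pt F \<and> on_line F L \<and> on_conic F ME \<and> \<not> same_pt D F \<and>
       (\<forall>P. pt P \<and> on_line P L \<and> on_conic P ME \<longrightarrow> same_pt D P \<or> same_pt F P) \<and>
       \<not> same_pt E F"
      then have pE: "pt E" and oE: "on_conic E MH" and u: "unique_conic_through ME {A, B, C, D, E}" by auto
      have False using True
      proof (elim disjE)
        assume "same_pt D A"
        then show False using case1[OF nd pA pC pE oA oB oC oE ab cb _ u] by blast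
      next
        assume "same_pt D B"
        then show False using case1[OF nd pB pA pE oB oC oA oE bc ac _, of D ME] u s1 by simp
      next
        assume "same_pt D C"
        then show False using case1[OF nd pC pB pE oC oA oB oE ca ba _, of D ME] u s2 by simp
      qed
      then show "on_join A E F" ..
    qed
  next
    case False
    then have nDA: "\<not> same_pt D A" and nDB: "\<not> same_pt D B" and nDC: "\<not> same_pt D C" by auto
    have c2: "on_join X E F"
      if "X \<in> {A, B, C}" "pt X" "on_line X L" "\<not> same_pt D X"
        "unique_conic_through ME {A, B, C, D, E}" "pt F"
        "\<forall>P. pt P \<and> on_line P L \<and> on_conic P ME \<longrightarrow> same_pt D P \<or> same_pt F P" for X E ME F
      using case2[of ME "{A, B, C, D, E}" X L D F E] that by blast
    show ?thesis
    proof (cases "L \<bullet> A = 0 \<or> L \<bullet> B = 0 \<or> L \<bullet> C = 0")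
      case True
      then obtain X where X: "X \<in> {A, B, C}" "L \<bullet> X = 0" by auto
      have pX: "pt X" using X pA pB pC by auto
      have nDX: "\<not> same_pt D X" using X nDA nDB nDC by auto
      have oX: "on_conic X MH" using X oA oB oC by auto
      show ?thesis
        apply (rule exI[of _ X])
        using pX oX c2[OF X(1) pX _ nDX] X(2) by (auto simp: on_line_def)
    next
      case False
      then have LA: "L \<bullet> A \<noteq> 0" and LB: "L \<bullet> B \<noteq> 0" and LC: "L \<bullet> C \<noteq> 0" by auto
      show ?thesis
      proof (cases "on_conic D MH")
        case True
        obtain G where G: "pt G" "on_conic G MH"
          "\<forall>E ME F. pt E \<and> on_conic E MH \<and> unique_conic_through ME {A, B, C, D, E} \<and>
             pt F \<and> on_line F L \<and> on_conic F ME \<and> \<not> same_pt D F \<longrightarrow> on_join G E F"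
          using case3[OF nd oA oB oC L pD LD True] by blast
        show ?thesis by (rule exI[of _ G]) (use G in blast)
      next
        case False
        then have hD: "D \<bullet> (MH *v D) \<noteq> 0" by (simp add: on_conic_def)
        show ?thesis
        proof (cases "(B \<times> C) \<bullet> D = 0")
          case False
          obtain G where G: "pt G" "on_conic G MH"
            "\<forall>E ME F. pt E \<and> on_conic E MH \<and> unique_conic_through ME {A, B, C, D, E} \<and>
               pt F \<and> on_line F L \<and> on_conic F ME \<and> \<not> same_pt D F \<longrightarrow> on_join G E F"
            using case4[OF nd pA pB pC oA oB oC nAB nAC nBC L pD LD hD False LA LB LC] by blast
          show ?thesis by (rule exI[of _ G]) (use G in blast)
        next
          case True
          have dABC: "(A \<times> B) \<bullet> C \<noteq> 0" using detABC[OF nd pA pB pC oA oB oC nAB nAC nBC] .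
          have bet: "(C \<times> A) \<bullet> D \<noteq> 0"
          proof
            assume h: "(C \<times> A) \<bullet> D = 0"
            have "D \<bullet> (B \<times> C) = 0" using True by (simp add: inner_commute)
            then obtain x y where xy: "D = x *\<^sub>R B + y *\<^sub>R C" using span2[OF bc] by blast
            have "x * ((C \<times> A) \<bullet> B) = 0" using h unfolding xy by (simp add: inner_add_right cr1 cr2)
            then have "x = 0" using dABC trip_cyc3[of C A B] by simp
            then have Dy: "D = y *\<^sub>R C" using xy by simp
            then have "y \<noteq> 0" using pD by (auto simp: pt_def)
            then have "same_pt C D" using Dy by (auto simp: same_pt_def)
            then show False using nDC same_pt_sym by blast
          qed
          obtain G where G: "pt G" "on_conic G MH"
            "\<forall>E ME F. pt E \<and> on_conic E MH \<and> unique_conic_through ME {B, C, A, D, E} \<and>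
               pt F \<and> on_line F L \<and> on_conic F ME \<and> \<not> same_pt D F \<longrightarrow> on_join G E F"
            using case4[OF nd pB pC pA oB oC oA nBC _ _ L pD LD hD bet LB LC LA] nAB nAC same_pt_sym
            by blast
          show ?thesis by (rule exI[of _ G]) (use G s1 in auto)
        qed
      qed
    qed
  qed
qed

end
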